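(* Let $K$ be a field and $A,B\in M_n(K)$. Then $\dim\ker M(A,B)\ge n\sum (m-1)$, where $m$ runs over the geometric multiplicities of the distinct eigenvalues of $B$ lying in $K$.
   Context: For a commutative ring $R$ with $1$ and $A,B\in M_n(R)$, $M(A,B)\in M_{n^2}(R)$ is the block matrix consisting of $n\times n$ blocks whose $(i,j)$-th block is $A^{j-1}B^{i-1}$ ($i,j=1,\dots,n$); it acts on $K^{n^2}$ viewed as column vectors. *)

theory Defs
  imports "Jordan_Normal_Form.Jordan_Normal_Form_Uniqueness"
begin

text \<open>The block matrix M(A,B) of size n^2 x n^2 (n = dim_row A), whose
  (i,j)-th n x n block (1-based) is A^(j-1) * B^(i-1).\<close>
definition block_M :: "'a :: comm_ring_1 mat \<Rightarrow> 'a mat \<Rightarrow> 'a mat" where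
  "block_M A B = (let n = dim_row A in
     mat (n * n) (n * n)
       (\<lambda>(r, c). ((A ^\<^sub>m (c div n)) * (B ^\<^sub>m (r div n))) $$ (r mod n, c mod n)))"

definition geom_mult :: "'a :: field mat \<Rightarrow> 'a \<Rightarrow> nat" where
  "geom_mult B e = kernel_dim (char_matrix B e)"

end

theory Submission
  imports Defs "Jordan_Normal_Form.Spectral_Radius"
begin


definition indep_vecs :: "nat \<Rightarrow> 'a :: field vec set \<Rightarrow> bool" where
  "indep_vecs p S = (\<forall>a. (\<forall>i<p. (\<Sum>v\<in>S. a v * v $ i) = 0) \<longrightarrow> (\<forall>v\<in>S. a v = 0))"

lemma (in vec_space) indep_vecs_iff:
  assumes fin: "finite S" and S: "S \<subseteq> carrier_vec n"
  shows "lin_indpt S \<longleftrightarrow> indep_vecs n S"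
proof
  assume li: "lin_indpt S"
  show "indep_vecs n S" unfolding indep_vecs_def
  proof (intro allI impI)
    fix a assume z: "\<forall>i<n. (\<Sum>v\<in>S. a v * v $ i) = 0"
    have "lincomb a S = 0\<^sub>v n"
      by (rule eq_vecI, insert z S, auto simp: lincomb_index)
    from not_lindepD[OF li fin subset_refl _ this[unfolded]] 
    show "\<forall>v\<in>S. a v = 0" by auto
  qed
next
  assume ind: "indep_vecs n S"
  show "lin_indpt S"
  proof (rule finite_lin_indpt2[OF fin], goal_cases)
    case 1 show ?case using S by simp
  next
    case (2 a)
    hence lc: "lincomb a S = 0\<^sub>v n" by simp
    have "\<forall>i<n. (\<Sum>v\<in>S. a v * v $ i) = 0"
    proof (intro allI impI)
      fix i assume i: "i < n"
      have "(\<Sum>v\<in>S. a v * v $ i) = lincomb a S $ i" using lincomb_index[OF i S] by simp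
      also have "\<dots> = 0" using lc i by simp
      finally show "(\<Sum>v\<in>S. a v * v $ i) = 0" .
    qed
    with ind show ?case unfolding indep_vecs_def by simp
  qed
qed

lemma kernel_dim_inj_mono:
  fixes P Q X :: "'a :: field mat"
  assumes P: "P \<in> carrier_mat np p" and Q: "Q \<in> carrier_mat nq q" and X: "X \<in> carrier_mat q p"
  and inj: "\<And>c. c \<in> carrier_vec p \<Longrightarrow> X *\<^sub>v c = 0\<^sub>v q \<Longrightarrow> c = 0\<^sub>v p"
  and into: "\<And>c. c \<in> mat_kernel P \<Longrightarrow> X *\<^sub>v c \<in> mat_kernel Q"
  shows "kernel_dim P \<le> kernel_dim Q"
proof -
  interpret KP: kernel np p P by (unfold_locales, rule P)
  interpret KQ: kernel nq q Q by (unfold_locales, rule Q)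
  obtain S where finS: "finite S" and bS: "KP.basis S" using kernel_basis_exists[OF P] by auto
  have dimP: "kernel_dim P = card S" using KP.Ker.dim_basis[OF finS bS] by simp
  have SK: "S \<subseteq> mat_kernel P" using bS unfolding KP.Ker.basis_def by auto
  have Sc: "S \<subseteq> carrier_vec p" using SK mat_kernel[OF P] by auto
  have "KP.Ker.lin_indpt S" using bS unfolding KP.Ker.basis_def by auto
  hence "KP.NC.lin_indpt S" using KP.lindep_same[OF SK] by simp
  hence indS: "indep_vecs p S" using KP.NC.indep_vecs_iff[OF finS Sc] by simp
  have injS: "inj_on (\<lambda>v. X *\<^sub>v v) S"
  proof (rule inj_onI)
    fix u v assume u: "u \<in> S" and v: "v \<in> S" and eq: "X *\<^sub>v u = X *\<^sub>v v"
    have uc: "u \<in> carrier_vec p" and vc: "v \<in> carrier_vec p" using u v Sc by auto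
    have "X *\<^sub>v (u - v) = X *\<^sub>v u - X *\<^sub>v v" using X uc vc by (simp add: mult_minus_distrib_mat_vec)
    also have "\<dots> = 0\<^sub>v q" using eq X vc by simp
    finally have "u - v = 0\<^sub>v p" using inj uc vc by simp
    hence "\<forall>i<p. (u - v) $ i = 0" by simp
    thus "u = v" using uc vc by (intro eq_vecI) auto
  qed
  define T where "T = (\<lambda>v. X *\<^sub>v v) ` S"
  have cardT: "card T = card S" unfolding T_def using card_image[OF injS] .
  have finT: "finite T" unfolding T_def using finS by simp
  have TK: "T \<subseteq> mat_kernel Q" unfolding T_def using into SK by auto
  have Tc: "T \<subseteq> carrier_vec q" using TK mat_kernel[OF Q] by auto
  have indT: "indep_vecs q T" unfolding indep_vecs_def
  proof (intro allI impI)
    fix a assume z: "\<forall>i<q. (\<Sum>v\<in>T. a v * v $ i) = 0"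
    define b where "b = (\<lambda>v. a (X *\<^sub>v v))"
    define w where "w = vec p (\<lambda>r. \<Sum>v\<in>S. b v * v $ r)"
    have wc: "w \<in> carrier_vec p" unfolding w_def by simp
    have "X *\<^sub>v w = 0\<^sub>v q"
    proof (rule eq_vecI)
      fix i assume "i < dim_vec (0\<^sub>v q :: 'a vec)"
      hence i: "i < q" by simp
      have "(X *\<^sub>v w) $ i = (\<Sum>r<p. X $$ (i,r) * (\<Sum>v\<in>S. b v * v $ r))"
        using X i unfolding w_def by (simp add: mult_mat_vec_def scalar_prod_def lessThan_atLeast0)
      also have "\<dots> = (\<Sum>v\<in>S. b v * (\<Sum>r<p. X $$ (i,r) * v $ r))"
        unfolding sum_distrib_left sum_distrib_right by (subst sum.swap, simp add: ac_simps)
      also have "\<dots> = (\<Sum>v\<in>S. b v * (X *\<^sub>v v) $ i)"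
        using X i Sc by (intro sum.cong, auto simp: mult_mat_vec_def scalar_prod_def lessThan_atLeast0)
      also have "\<dots> = (\<Sum>v\<in>T. a v * v $ i)" unfolding T_def b_def
        by (subst sum.reindex[OF injS], simp)
      also have "\<dots> = 0" using z i by simp
      finally show "(X *\<^sub>v w) $ i = (0\<^sub>v q :: 'a vec) $ i" using i by simp
    qed (insert X, simp)
    hence w0: "w = 0\<^sub>v p" using inj wc by simp
    have "\<forall>r<p. (\<Sum>v\<in>S. b v * v $ r) = 0"
    proof (intro allI impI)
      fix r assume r: "r < p"
      have "(\<Sum>v\<in>S. b v * v $ r) = w $ r" unfolding w_def using r by simp
      thus "(\<Sum>v\<in>S. b v * v $ r) = 0" using w0 r by simp
    qed
    with indS have "\<forall>v\<in>S. b v = 0" unfolding indep_vecs_def by blast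
    thus "\<forall>v\<in>T. a v = 0" unfolding T_def b_def by auto
  qed
  have "KQ.NC.lin_indpt T" using KQ.NC.indep_vecs_iff[OF finT Tc] indT by simp
  hence liT: "KQ.Ker.lin_indpt T" using KQ.lindep_same[OF TK] by simp
  obtain R where finR: "finite R" and bR: "KQ.basis R" using kernel_basis_exists[OF Q] by auto
  have fd: "KQ.Ker.fin_dim" unfolding KQ.Ker.fin_dim_def using finR bR unfolding KQ.Ker.basis_def by auto
  have "card T \<le> KQ.Ker.dim" using KQ.Ker.li_le_dim(2)[OF fd _ liT] TK by simp
  thus ?thesis using dimP cardT by simp
qed



lemma mult_mat_vec_index_sum:
  assumes "A \<in> carrier_mat nr nc" "v \<in> carrier_vec nc" "i < nr"
  shows "(A *\<^sub>v v) $ i = (\<Sum>r<nc. A $$ (i,r) * v $ r)"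
  using assms by (simp add: mult_mat_vec_def scalar_prod_def lessThan_atLeast0)

lemma eigen_indep:
  fixes B :: "'a::field mat"
  assumes B: "B \<in> carrier_mat n n" and fin: "finite L"
  and w: "\<And>e. e \<in> L \<Longrightarrow> w e \<in> carrier_vec n \<and> B *\<^sub>v w e = e \<cdot>\<^sub>v w e"
  and z: "\<And>i. i < n \<Longrightarrow> (\<Sum>e\<in>L. w e $ i) = 0"
  shows "\<forall>e\<in>L. w e = 0\<^sub>v n"
  using fin w z
proof (induct L arbitrary: w rule: finite_induct)
  case empty then show ?case by simp
next
  case (insert e0 L w)
  define w' where "w' = (\<lambda>e. (e - e0) \<cdot>\<^sub>v w e)"
  have wc: "\<And>e. e \<in> insert e0 L \<Longrightarrow> w e \<in> carrier_vec n" using insert(4) by auto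
  have ev: "\<And>i e. e \<in> insert e0 L \<Longrightarrow> i < n \<Longrightarrow> (\<Sum>r<n. B $$ (i,r) * w e $ r) = e * w e $ i"
  proof -
    fix i e assume e: "e \<in> insert e0 L" and i: "i < n"
    have "(\<Sum>r<n. B $$ (i,r) * w e $ r) = (B *\<^sub>v w e) $ i"
      using mult_mat_vec_index_sum[OF B wc[OF e] i] by simp
    also have "\<dots> = e * w e $ i" using insert(4)[OF e] i wc[OF e] by simp
    finally show "(\<Sum>r<n. B $$ (i,r) * w e $ r) = e * w e $ i" .
  qed
  have w'1: "\<And>e. e \<in> L \<Longrightarrow> w' e \<in> carrier_vec n \<and> B *\<^sub>v w' e = e \<cdot>\<^sub>v w' e"
  proof
    fix e assume e: "e \<in> L"
    hence e': "e \<in> insert e0 L" by simp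
    show "w' e \<in> carrier_vec n" unfolding w'_def using wc[OF e'] by simp
    show "B *\<^sub>v w' e = e \<cdot>\<^sub>v w' e" unfolding w'_def
      using insert(4)[OF e'] wc[OF e'] B by (simp add: mult_mat_vec smult_smult_assoc mult.commute)
  qed
  have w'2: "(\<Sum>e\<in>L. w' e $ i) = 0" if i: "i < n" for i
  proof -
    have s0: "(\<Sum>e\<in>insert e0 L. w e $ i) = 0" using insert(5)[OF i] .
    have "(\<Sum>e\<in>insert e0 L. e * w e $ i) = (\<Sum>e\<in>insert e0 L. \<Sum>r<n. B $$ (i,r) * w e $ r)"
      using ev i by simp
    also have "\<dots> = (\<Sum>r<n. B $$ (i,r) * (\<Sum>e\<in>insert e0 L. w e $ r))"
      by (subst sum.swap, simp add: sum_distrib_left)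
    also have "\<dots> = 0" using insert(5) by simp
    finally have s1: "(\<Sum>e\<in>insert e0 L. e * w e $ i) = 0" .
    have "(\<Sum>e\<in>L. w' e $ i) = (\<Sum>e\<in>insert e0 L. (e - e0) * w e $ i)"
      unfolding w'_def using insert(1,2) i by (simp, intro sum.cong refl) (metis insertI2 wc carrier_vecD index_smult_vec(1))
    also have "\<dots> = (\<Sum>e\<in>insert e0 L. e * w e $ i) - e0 * (\<Sum>e\<in>insert e0 L. w e $ i)"
      by (simp add: algebra_simps sum_subtractf sum_distrib_left)
    also have "\<dots> = 0" using s0 s1 by simp
    finally show ?thesis .
  qed
  from insert(3)[OF w'1 w'2] have w'0: "\<forall>e\<in>L. w' e = 0\<^sub>v n" by auto
  have wL: "\<forall>e\<in>L. w e = 0\<^sub>v n"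
  proof
    fix e assume e: "e \<in> L"
    have ne: "e - e0 \<noteq> 0" using e insert(2) by auto
    have "w e = (1 / (e - e0)) \<cdot>\<^sub>v w' e" unfolding w'_def using ne
      by (simp add: smult_smult_assoc)
    thus "w e = 0\<^sub>v n" using w'0 e by (auto intro!: eq_vecI)
  qed
  have "w e0 = 0\<^sub>v n"
  proof (rule eq_vecI)
    fix i assume "i < dim_vec (0\<^sub>v n :: 'a vec)"
    hence i: "i < n" by simp
    have "w e0 $ i + (\<Sum>e\<in>L. w e $ i) = 0" using insert(5)[OF i] insert(1,2) by simp
    moreover have "(\<Sum>e\<in>L. w e $ i) = 0" using wL i by simp
    ultimately show "w e0 $ i = (0\<^sub>v n :: 'a vec) $ i" using i by simp
  qed (insert wc, auto)
  with wL show ?case by simp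
qed



lemma sum_block: fixes j s :: nat shows "sum F {j*s..<j*s+s} = (\<Sum>k<s. F (j*s+k))"
  by (rule sum.reindex_bij_witness[where i="\<lambda>k. j*s+k" and j="\<lambda>c. c - j*s"]) auto

lemma sum_split_mult: fixes F :: "nat \<Rightarrow> 'a::comm_monoid_add" shows "(\<Sum>c<n*s. F c) = (\<Sum>j<n. \<Sum>k<s. F (j*s+k))"
proof -
  have "(\<Sum>c<n*s. F c) = (\<Sum>j<n. sum F {j*s..<j*s+s})" using sum.nat_group[of F s n] by simp
  also have "\<dots> = (\<Sum>j<n. \<Sum>k<s. F (j*s+k))"
    by (intro sum.cong refl sum_block)
  finally show ?thesis .
qed

lemma block_M_carrier: "A \<in> carrier_mat n n \<Longrightarrow> block_M A B \<in> carrier_mat (n*n) (n*n)"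
  unfolding block_M_def by (auto simp: Let_def)

lemma block_M_index: "A \<in> carrier_mat n n \<Longrightarrow> R < n*n \<Longrightarrow> R' < n*n \<Longrightarrow>
  block_M A B $$ (R, R') = ((A ^\<^sub>m (R' div n)) * (B ^\<^sub>m (R div n))) $$ (R mod n, R' mod n)"
  unfolding block_M_def by (auto simp: Let_def)

lemma pow_eigen: fixes B :: "'a::field mat"
  assumes B: "B \<in> carrier_mat n n" and u: "u \<in> carrier_vec n" and ev: "B *\<^sub>v u = l \<cdot>\<^sub>v u"
  shows "(B ^\<^sub>m i) *\<^sub>v u = (l ^ i) \<cdot>\<^sub>v u"
proof (induct i)
  case 0 then show ?case using u B by simp
next
  case (Suc i)
  have "(B ^\<^sub>m Suc i) *\<^sub>v u = (B ^\<^sub>m i * B) *\<^sub>v u" by simp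
  also have "\<dots> = (B ^\<^sub>m i) *\<^sub>v (B *\<^sub>v u)" using B u by (intro assoc_mult_mat_vec[of _ n n _ n], auto)
  also have "\<dots> = l \<cdot>\<^sub>v ((B ^\<^sub>m i) *\<^sub>v u)" unfolding ev using B u by (intro mult_mat_vec[of _ n n], auto)
  also have "\<dots> = (l ^ Suc i) \<cdot>\<^sub>v u" unfolding Suc using u by (simp add: smult_smult_assoc)
  finally show ?case .
qed



lemma idx_lt: fixes j k n s :: nat shows "j < n \<Longrightarrow> k < s \<Longrightarrow> j*s+k < n*s"
proof -
  assume "j < n" "k < s"
  hence "j*s + k < j*s + s" by simp
  also have "\<dots> = Suc j * s" by simp
  also have "\<dots> \<le> n * s" using \<open>j < n\<close> by (intro mult_le_mono1) simp
  finally show ?thesis .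
qed

lemma idx_div: fixes j k s :: nat shows "k < s \<Longrightarrow> (j*s+k) div s = j" by simp
lemma idx_mod: fixes j k s :: nat shows "k < s \<Longrightarrow> (j*s+k) mod s = k" by simp

lemma lam_sum:
  fixes g :: "nat \<Rightarrow> 'a::comm_ring_1"
  assumes g_inj: "inj_on g {..<d}" and l: "l \<in> g ` {..<d}"
  shows "(\<Sum>t<d. if l = g t then (g t)^i * x else 0) = l^i * x"
proof -
  from l obtain t0 where t0: "t0 < d" "l = g t0" by auto
  have "(\<Sum>t<d. if l = g t then (g t)^i * x else 0) = (\<Sum>t<d. if t = t0 then l^i * x else 0)"
  proof (intro sum.cong refl)
    fix t assume t: "t \<in> {..<d}"
    have "l = g t \<longleftrightarrow> t = t0" using g_inj t t0 unfolding inj_on_def by auto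
    thus "(if l = g t then (g t)^i * x else 0) = (if t = t0 then l^i * x else 0)" using t0 by auto
  qed
  also have "\<dots> = l^i * x" using t0 by simp
  finally show ?thesis .
qed



lemma kernel_dim_ge_cols_minus_rows:
  fixes C :: "'a :: field mat"
  shows "dim_col C - dim_row C \<le> kernel_dim C"
proof -
  define nr where "nr = dim_row C"
  define nc where "nc = dim_col C"
  have C: "C \<in> carrier_mat nr nc" unfolding nr_def nc_def by auto
  obtain G where G: "gauss_jordan_single C = G" by auto
  note gj = gauss_jordan_single[OF C G]
  from gj(3)[unfolded row_echelon_form_def] gj(2) obtain f where pf: "pivot_fun G f nc" by auto
  note pp = pivot_positions[OF gj(2) pf]
  have "length (pivot_positions G) \<le> nr" unfolding pp(4)
    by (rule order.trans[OF card_mono[of "{..<nr}"]], auto)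
  then show ?thesis unfolding kernel_dim_code G nr_def nc_def by simp
qed


lemma core:
  fixes A B :: "'a::field mat"
  assumes A: "A \<in> carrier_mat n n" and B: "B \<in> carrier_mat n n"
  and u: "\<And>k. k < s \<Longrightarrow> u k \<in> carrier_vec n \<and> B *\<^sub>v u k = lam k \<cdot>\<^sub>v u k"
  and ind: "\<And>a. \<forall>r<n. (\<Sum>k<s. a k * u k $ r) = 0 \<Longrightarrow> \<forall>k<s. a k = 0"
  and g_inj: "inj_on g {..<d}"
  and lam_g: "\<And>k. k < s \<Longrightarrow> lam k \<in> g ` {..<d}"
  shows "n*s - d*n \<le> kernel_dim (block_M A B)"
proof -
  define C where "C = mat (d*n) (n*s) (\<lambda>(R,c). if lam (c mod s) = g (R div n)
     then (A ^\<^sub>m (c div s) *\<^sub>v u (c mod s)) $ (R mod n) else 0)"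
  define X where "X = mat (n*n) (n*s) (\<lambda>(R,c). if R div n = c div s then u (c mod s) $ (R mod n) else 0)"
  let ?M = "block_M A B"
  have C: "C \<in> carrier_mat (d*n) (n*s)" unfolding C_def by simp
  have X: "X \<in> carrier_mat (n*n) (n*s)" unfolding X_def by simp
  have M: "?M \<in> carrier_mat (n*n) (n*n)" by (rule block_M_carrier[OF A])
  have Xv: "(X *\<^sub>v v) $ (j*n+r) = (\<Sum>k<s. u k $ r * v $ (j*s+k))"
    if v: "v \<in> carrier_vec (n*s)" and j: "j < n" and r: "r < n" for v j r
  proof -
    have R: "j*n+r < n*n" using idx_lt[OF j r] .
    have "(X *\<^sub>v v) $ (j*n+r) = (\<Sum>c<n*s. X $$ (j*n+r, c) * v $ c)"
      by (rule mult_mat_vec_index_sum[OF X v R])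
    also have "\<dots> = (\<Sum>j'<n. \<Sum>k<s. X $$ (j*n+r, j'*s+k) * v $ (j'*s+k))"
      by (rule sum_split_mult)
    also have "\<dots> = (\<Sum>j'<n. \<Sum>k<s. (if j' = j then u k $ r * v $ (j*s+k) else 0))"
    proof (intro sum.cong refl)
      fix j' k assume j': "j' \<in> {..<n}" and k: "k \<in> {..<s}"
      have "j'*s+k < n*s" using idx_lt j' k by auto
      then show "X $$ (j*n+r, j'*s+k) * v $ (j'*s+k) = (if j' = j then u k $ r * v $ (j*s+k) else 0)"
        unfolding X_def using R k r by (auto simp: idx_div idx_mod)
    qed
    also have "\<dots> = (\<Sum>k<s. \<Sum>j'<n. (if j' = j then u k $ r * v $ (j*s+k) else 0))"
      by (rule sum.swap)
    also have "\<dots> = (\<Sum>k<s. u k $ r * v $ (j*s+k))" using j by simp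
    finally show ?thesis .
  qed
  have inj: "v = 0\<^sub>v (n*s)" if v: "v \<in> carrier_vec (n*s)" and z: "X *\<^sub>v v = 0\<^sub>v (n*n)" for v
  proof -
    have vz: "v $ (j*s+k) = 0" if j: "j < n" and k: "k < s" for j k
    proof -
      have "\<forall>r<n. (\<Sum>k<s. v $ (j*s+k) * u k $ r) = 0"
      proof (intro allI impI)
        fix r assume r: "r < n"
        have "(\<Sum>k<s. v $ (j*s+k) * u k $ r) = (X *\<^sub>v v) $ (j*n+r)"
          unfolding Xv[OF v j r] by (simp add: mult.commute)
        also have "\<dots> = 0" using z idx_lt[OF j r] by simp
        finally show "(\<Sum>k<s. v $ (j*s+k) * u k $ r) = 0" .
      qed
      from ind[OF this] k show ?thesis by simp
    qed
    show ?thesis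
    proof (rule eq_vecI)
      fix c assume "c < dim_vec (0\<^sub>v (n*s) :: 'a vec)"
      hence c: "c < n*s" by simp
      hence s: "0 < s" by (cases s, auto)
      have cs: "c = (c div s)*s + c mod s" by simp
      have "c div s < n" using c by (simp add: less_mult_imp_div_less)
      from vz[OF this, of "c mod s"] s have "v $ c = 0" by simp
      thus "v $ c = (0\<^sub>v (n*s)) $ c" using c by simp
    qed (insert v, simp)
  qed
  have into: "X *\<^sub>v v \<in> mat_kernel ?M" if vk: "v \<in> mat_kernel C" for v
  proof -
    have v: "v \<in> carrier_vec (n*s)" and Cv: "C *\<^sub>v v = 0\<^sub>v (d*n)" using mat_kernelD[OF C vk] by auto
    define F where "F = (\<lambda>r j k. v $ (j*s+k) * (A ^\<^sub>m j *\<^sub>v u k) $ r)"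
    have Cidx: "(\<Sum>j<n. \<Sum>k<s. if lam k = g t then F r j k else 0) = 0"
      if t: "t < d" and r: "r < n" for t r
    proof -
      have R: "t*n+r < d*n" using idx_lt[OF t r] .
      have "0 = (C *\<^sub>v v) $ (t*n+r)" using Cv R by simp
      also have "\<dots> = (\<Sum>c<n*s. C $$ (t*n+r, c) * v $ c)"
        by (rule mult_mat_vec_index_sum[OF C v R])
      also have "\<dots> = (\<Sum>j<n. \<Sum>k<s. C $$ (t*n+r, j*s+k) * v $ (j*s+k))"
        by (rule sum_split_mult)
      also have "\<dots> = (\<Sum>j<n. \<Sum>k<s. if lam k = g t then F r j k else 0)"
      proof (intro sum.cong refl)
        fix j k assume j: "j \<in> {..<n}" and k: "k \<in> {..<s}"
        have "j*s+k < n*s" using idx_lt j k by auto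
        then show "C $$ (t*n+r, j*s+k) * v $ (j*s+k) = (if lam k = g t then F r j k else 0)"
          unfolding C_def F_def using R k r by (auto simp: idx_div idx_mod)
      qed
      finally show ?thesis by simp
    qed
    have Mx: "(?M *\<^sub>v (X *\<^sub>v v)) $ (i*n+r) = (\<Sum>j<n. \<Sum>k<s. lam k ^ i * F r j k)"
      if i: "i < n" and r: "r < n" for i r
    proof -
      have R: "i*n+r < n*n" using idx_lt[OF i r] .
      have Xv': "X *\<^sub>v v \<in> carrier_vec (n*n)" using X v by simp
      have "(?M *\<^sub>v (X *\<^sub>v v)) $ (i*n+r) = (\<Sum>c<n*n. ?M $$ (i*n+r, c) * (X *\<^sub>v v) $ c)"
        by (rule mult_mat_vec_index_sum[OF M Xv' R])
      also have "\<dots> = (\<Sum>j<n. \<Sum>r'<n. ?M $$ (i*n+r, j*n+r') * (X *\<^sub>v v) $ (j*n+r'))"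
        by (rule sum_split_mult)
      also have "\<dots> = (\<Sum>j<n. \<Sum>r'<n. (A ^\<^sub>m j * B ^\<^sub>m i) $$ (r, r') * (\<Sum>k<s. u k $ r' * v $ (j*s+k)))"
      proof (intro sum.cong refl)
        fix j r' assume j: "j \<in> {..<n}" and r': "r' \<in> {..<n}"
        have "j*n+r' < n*n" using idx_lt j r' by auto
        then show "?M $$ (i*n+r, j*n+r') * (X *\<^sub>v v) $ (j*n+r') =
          (A ^\<^sub>m j * B ^\<^sub>m i) $$ (r, r') * (\<Sum>k<s. u k $ r' * v $ (j*s+k))"
          using block_M_index[OF A R] Xv[OF v] j r' r by (auto simp: idx_div idx_mod)
      qed
      also have "\<dots> = (\<Sum>j<n. \<Sum>k<s. v $ (j*s+k) * (\<Sum>r'<n. (A ^\<^sub>m j * B ^\<^sub>m i) $$ (r, r') * u k $ r'))"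
      proof (rule sum.cong[OF refl])
        fix j assume j: "j \<in> {..<n}"
        show "(\<Sum>r'<n. (A ^\<^sub>m j * B ^\<^sub>m i) $$ (r, r') * (\<Sum>k<s. u k $ r' * v $ (j*s+k))) =
          (\<Sum>k<s. v $ (j*s+k) * (\<Sum>r'<n. (A ^\<^sub>m j * B ^\<^sub>m i) $$ (r, r') * u k $ r'))"
          unfolding sum_distrib_left by (subst sum.swap, intro sum.cong refl, simp add: ac_simps)
      qed
      also have "\<dots> = (\<Sum>j<n. \<Sum>k<s. lam k ^ i * F r j k)"
      proof (intro sum.cong refl)
        fix j k assume j: "j \<in> {..<n}" and k: "k \<in> {..<s}"
        have uk: "u k \<in> carrier_vec n" and ev: "B *\<^sub>v u k = lam k \<cdot>\<^sub>v u k" using u k by auto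
        have Aj: "A ^\<^sub>m j \<in> carrier_mat n n" using A by simp
        have Bi: "B ^\<^sub>m i \<in> carrier_mat n n" using B by simp
        have "(A ^\<^sub>m j * B ^\<^sub>m i) *\<^sub>v u k = A ^\<^sub>m j *\<^sub>v (B ^\<^sub>m i *\<^sub>v u k)"
          using Aj Bi uk by (rule assoc_mult_mat_vec)
        also have "\<dots> = A ^\<^sub>m j *\<^sub>v (lam k ^ i \<cdot>\<^sub>v u k)" using pow_eigen[OF B uk ev] by simp
        also have "\<dots> = lam k ^ i \<cdot>\<^sub>v (A ^\<^sub>m j *\<^sub>v u k)" using Aj uk by (rule mult_mat_vec)
        finally have eq: "(A ^\<^sub>m j * B ^\<^sub>m i) *\<^sub>v u k = lam k ^ i \<cdot>\<^sub>v (A ^\<^sub>m j *\<^sub>v u k)" .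
        have "(\<Sum>r'<n. (A ^\<^sub>m j * B ^\<^sub>m i) $$ (r, r') * u k $ r') = ((A ^\<^sub>m j * B ^\<^sub>m i) *\<^sub>v u k) $ r"
          using mult_mat_vec_index_sum[of "A ^\<^sub>m j * B ^\<^sub>m i" n n "u k" r] Aj Bi uk r by simp
        also have "\<dots> = lam k ^ i * (A ^\<^sub>m j *\<^sub>v u k) $ r" unfolding eq using Aj uk r by (subst index_smult_vec(1), auto simp: carrier_matD)
        finally show "v $ (j*s+k) * (\<Sum>r'<n. (A ^\<^sub>m j * B ^\<^sub>m i) $$ (r, r') * u k $ r') = lam k ^ i * F r j k"
          unfolding F_def by (simp add: ac_simps)
      qed
      finally show ?thesis .
    qed
    have Mz: "(?M *\<^sub>v (X *\<^sub>v v)) $ R = 0" if R: "R < n*n" for R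
    proof -
      define i where "i = R div n"
      define r where "r = R mod n"
      have n: "0 < n" using R by (cases n, auto)
      have i: "i < n" unfolding i_def using R by (simp add: less_mult_imp_div_less)
      have r: "r < n" unfolding r_def using n by simp
      have Rir: "R = i*n+r" unfolding i_def r_def by simp
      have "(?M *\<^sub>v (X *\<^sub>v v)) $ R = (\<Sum>j<n. \<Sum>k<s. lam k ^ i * F r j k)"
        unfolding Rir by (rule Mx[OF i r])
      also have "\<dots> = (\<Sum>j<n. \<Sum>k<s. \<Sum>t<d. if lam k = g t then (g t)^i * F r j k else 0)"
        using lam_sum[OF g_inj lam_g] by simp
      also have "\<dots> = (\<Sum>t<d. (g t)^i * (\<Sum>j<n. \<Sum>k<s. if lam k = g t then F r j k else 0))"
      proof -
        have "(\<Sum>j<n. \<Sum>k<s. \<Sum>t<d. if lam k = g t then (g t)^i * F r j k else 0)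
          = (\<Sum>j<n. \<Sum>t<d. \<Sum>k<s. if lam k = g t then (g t)^i * F r j k else 0)"
          by (rule sum.cong[OF refl], rule sum.swap)
        also have "\<dots> = (\<Sum>t<d. \<Sum>j<n. \<Sum>k<s. if lam k = g t then (g t)^i * F r j k else 0)"
          by (rule sum.swap)
        also have "\<dots> = (\<Sum>t<d. (g t)^i * (\<Sum>j<n. \<Sum>k<s. if lam k = g t then F r j k else 0))"
          unfolding sum_distrib_left by (intro sum.cong refl, simp)
        finally show ?thesis .
      qed
      also have "\<dots> = 0" using Cidx r by simp
      finally show ?thesis .
    qed
    show ?thesis
    proof (rule mat_kernelI[OF M])
      show "X *\<^sub>v v \<in> carrier_vec (n*n)" using X v by simp
      show "?M *\<^sub>v (X *\<^sub>v v) = 0\<^sub>v (n*n)"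
        by (rule eq_vecI, insert Mz M, auto)
    qed
  qed
  have "n*s - d*n \<le> kernel_dim C" using kernel_dim_ge_cols_minus_rows[of C] C by simp
  also have "\<dots> \<le> kernel_dim ?M"
    by (rule kernel_dim_inj_mono[OF C M X inj into], auto)
  finally show ?thesis .
qed



lemma eig_basis:
  fixes B :: "'a::field mat"
  assumes B: "B \<in> carrier_mat n n"
  shows "\<exists>S. finite S \<and> card S = geom_mult B e \<and> indep_vecs n S \<and>
     (\<forall>v\<in>S. v \<in> carrier_vec n \<and> B *\<^sub>v v = e \<cdot>\<^sub>v v) \<and> (eigenvalue B e \<longrightarrow> S \<noteq> {})"
proof -
  define CM where "CM = char_matrix B e"
  have CM: "CM \<in> carrier_mat n n" unfolding CM_def using B by simp
  interpret K: kernel n n CM by (unfold_locales, rule CM)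
  obtain S where finS: "finite S" and bS: "K.basis S" using kernel_basis_exists[OF CM] by auto
  have card: "card S = geom_mult B e" unfolding geom_mult_def CM_def[symmetric]
    using K.Ker.dim_basis[OF finS bS] by simp
  have SK: "S \<subseteq> mat_kernel CM" using bS unfolding K.Ker.basis_def by auto
  have Sc: "S \<subseteq> carrier_vec n" using SK mat_kernel[OF CM] by auto
  have "K.Ker.lin_indpt S" using bS unfolding K.Ker.basis_def by auto
  hence "K.NC.lin_indpt S" using K.lindep_same[OF SK] by simp
  hence ind: "indep_vecs n S" using K.NC.indep_vecs_iff[OF finS Sc] by simp
  have eig: "\<forall>v\<in>S. v \<in> carrier_vec n \<and> B *\<^sub>v v = e \<cdot>\<^sub>v v"
  proof
    fix v assume v: "v \<in> S"
    have vc: "v \<in> carrier_vec n" and z: "CM *\<^sub>v v = 0\<^sub>v n" using v SK mat_kernelD[OF CM] by auto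
    show "v \<in> carrier_vec n \<and> B *\<^sub>v v = e \<cdot>\<^sub>v v"
    proof (cases "v = 0\<^sub>v n")
      case True
      then show ?thesis using B by (auto intro!: eq_vecI)
    next
      case False
      with eigenvector_char_matrix[OF B, of v e] vc z have "eigenvector B v e" unfolding CM_def by simp
      thus ?thesis unfolding eigenvector_def using vc by simp
    qed
  qed
  have ne: "eigenvalue B e \<longrightarrow> S \<noteq> {}"
  proof (intro impI notI)
    assume "eigenvalue B e" and S0: "S = {}"
    then obtain v where vc: "v \<in> carrier_vec n" and v0: "v \<noteq> 0\<^sub>v n" and z: "CM *\<^sub>v v = 0\<^sub>v n"
      unfolding eigenvalue_char_matrix[OF B] CM_def by auto
    have vk: "v \<in> mat_kernel CM" using mat_kernelI[OF CM vc z] .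
    have "K.Ker.span S = mat_kernel CM" using bS unfolding K.Ker.basis_def by auto
    hence "mat_kernel CM = {0\<^sub>v n}" using K.Ker.span_empty unfolding S0 by simp
    with vk v0 show False by simp
  qed
  show ?thesis using finS card ind eig ne by blast
qed



theorem mainTheorem2:
  fixes A B :: "'a :: field mat" and n :: nat
  assumes "A \<in> carrier_mat n n" and "B \<in> carrier_mat n n"
  shows "kernel_dim (block_M A B) \<ge> n * (\<Sum>e\<in>{e. eigenvalue B e}. geom_mult B e - 1)"
proof -
  note A = assms(1) and B = assms(2)
  define L where "L = {e. eigenvalue B e}"
  have finL: "finite L" unfolding L_def using card_finite_spectrum(1)[OF B] unfolding spectrum_def .
  define S where "S = (\<lambda>e. SOME S. finite S \<and> card S = geom_mult B e \<and> indep_vecs n S \<and>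
     (\<forall>v\<in>S. v \<in> carrier_vec n \<and> B *\<^sub>v v = e \<cdot>\<^sub>v v) \<and> (eigenvalue B e \<longrightarrow> S \<noteq> {}))"
  have S: "finite (S e) \<and> card (S e) = geom_mult B e \<and> indep_vecs n (S e) \<and>
     (\<forall>v\<in>S e. v \<in> carrier_vec n \<and> B *\<^sub>v v = e \<cdot>\<^sub>v v) \<and> (eigenvalue B e \<longrightarrow> S e \<noteq> {})" for e
    unfolding S_def by (rule someI_ex[OF eig_basis[OF B]])
  have S_fin: "finite (S e)" for e using S[of e] by blast
  have S_card: "card (S e) = geom_mult B e" for e using S[of e] by blast
  have S_ind: "indep_vecs n (S e)" for e using S[of e] by blast
  have S_eig: "\<forall>v\<in>S e. v \<in> carrier_vec n \<and> B *\<^sub>v v = e \<cdot>\<^sub>v v" for e using S[of e] by blast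
  have S_ne: "eigenvalue B e \<Longrightarrow> S e \<noteq> {}" for e using S[of e] by blast
  define P where "P = (SIGMA e:L. S e)"
  have finP: "finite P" unfolding P_def using finL S_fin by auto
  define s where "s = card P"
  define d where "d = card L"
  have s_sum: "s = (\<Sum>e\<in>L. geom_mult B e)" unfolding s_def P_def using finL S_fin S_card by simp
  obtain f where f: "bij_betw f {0..<s} P" using ex_bij_betw_nat_finite[OF finP] unfolding s_def by auto
  obtain g where g: "bij_betw g {0..<d} L" using ex_bij_betw_nat_finite[OF finL] unfolding d_def by auto
  define u where "u = (\<lambda>k. snd (f k))"
  define lam where "lam = (\<lambda>k. fst (f k))"
  have fP: "k < s \<Longrightarrow> f k \<in> P" for k using f unfolding bij_betw_def by auto
  have core_u: "\<And>k. k < s \<Longrightarrow> u k \<in> carrier_vec n \<and> B *\<^sub>v u k = lam k \<cdot>\<^sub>v u k"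
  proof -
    fix k assume "k < s"
    from fP[OF this] have "snd (f k) \<in> S (fst (f k))" unfolding P_def by (cases "f k", auto)
    thus "u k \<in> carrier_vec n \<and> B *\<^sub>v u k = lam k \<cdot>\<^sub>v u k" using S_eig unfolding u_def lam_def by blast
  qed
  have g_inj: "inj_on g {..<d}" using g unfolding bij_betw_def lessThan_atLeast0 by auto
  have lam_g: "\<And>k. k < s \<Longrightarrow> lam k \<in> g ` {..<d}"
  proof -
    fix k assume "k < s"
    from fP[OF this] have "lam k \<in> L" unfolding P_def lam_def by (cases "f k", auto)
    thus "lam k \<in> g ` {..<d}" using g unfolding bij_betw_def lessThan_atLeast0 by auto
  qed
  have ind: "\<forall>k<s. a k = 0" if z: "\<forall>r<n. (\<Sum>k<s. a k * u k $ r) = 0" for a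
  proof -
    define fi where "fi = the_inv_into {0..<s} f"
    have fi: "bij_betw fi P {0..<s}" unfolding fi_def by (rule bij_betw_the_inv_into[OF f])
    have fif: "k < s \<Longrightarrow> fi (f k) = k" for k unfolding fi_def
      using f unfolding bij_betw_def by (auto intro: the_inv_into_f_f)
    define c where "c = (\<lambda>e v. a (fi (e, v)))"
    define w where "w = (\<lambda>e. vec n (\<lambda>r. \<Sum>v\<in>S e. c e v * v $ r))"
    have sums: "(\<Sum>e\<in>L. w e $ r) = 0" if r: "r < n" for r
    proof -
      have "(\<Sum>e\<in>L. w e $ r) = (\<Sum>e\<in>L. \<Sum>v\<in>S e. c e v * v $ r)" unfolding w_def using r by simp
      also have "\<dots> = (\<Sum>p\<in>P. a (fi p) * snd p $ r)" unfolding P_def c_def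
        using finL S_fin by (subst sum.Sigma, auto simp: case_prod_beta)
      also have "\<dots> = (\<Sum>k\<in>{0..<s}. a (fi (f k)) * snd (f k) $ r)"
        by (rule sum.reindex_bij_betw[OF f, symmetric])
      also have "\<dots> = (\<Sum>k<s. a k * u k $ r)" unfolding u_def lessThan_atLeast0 using fif
        by (intro sum.cong refl, auto)
      also have "\<dots> = 0" using z r by simp
      finally show ?thesis .
    qed
    have weig: "w e \<in> carrier_vec n \<and> B *\<^sub>v w e = e \<cdot>\<^sub>v w e" if e: "e \<in> L" for e
    proof
      show wc: "w e \<in> carrier_vec n" unfolding w_def by simp
      show "B *\<^sub>v w e = e \<cdot>\<^sub>v w e"
      proof (rule eq_vecI)
        fix i assume "i < dim_vec (e \<cdot>\<^sub>v w e)"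
        hence i: "i < n" unfolding w_def by simp
        have Sc: "\<forall>v\<in>S e. v \<in> carrier_vec n \<and> B *\<^sub>v v = e \<cdot>\<^sub>v v" using S_eig by blast
        have "(B *\<^sub>v w e) $ i = (\<Sum>r<n. B $$ (i,r) * (\<Sum>v\<in>S e. c e v * v $ r))"
          using mult_mat_vec_index_sum[OF B wc i] unfolding w_def by simp
        also have "\<dots> = (\<Sum>v\<in>S e. c e v * (\<Sum>r<n. B $$ (i,r) * v $ r))"
          unfolding sum_distrib_left by (subst sum.swap, intro sum.cong refl, simp add: ac_simps)
        also have "\<dots> = (\<Sum>v\<in>S e. c e v * (e * v $ i))"
        proof (intro sum.cong refl)
          fix v assume v: "v \<in> S e"
          have vc: "v \<in> carrier_vec n" and ev: "B *\<^sub>v v = e \<cdot>\<^sub>v v" using Sc v by auto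
          have "(\<Sum>r<n. B $$ (i,r) * v $ r) = (B *\<^sub>v v) $ i" using mult_mat_vec_index_sum[OF B vc i] by simp
          also have "\<dots> = e * v $ i" unfolding ev using vc i by simp
          finally show "c e v * (\<Sum>r<n. B $$ (i,r) * v $ r) = c e v * (e * v $ i)" by simp
        qed
        also have "\<dots> = (e \<cdot>\<^sub>v w e) $ i" unfolding w_def using i
          by (simp add: sum_distrib_left ac_simps)
        finally show "(B *\<^sub>v w e) $ i = (e \<cdot>\<^sub>v w e) $ i" .
      qed (simp add: w_def carrier_matD[OF B])
    qed
    have w0: "\<forall>e\<in>L. w e = 0\<^sub>v n" by (rule eigen_indep[OF B finL weig sums])
    have c0: "c e v = 0" if e: "e \<in> L" and v: "v \<in> S e" for e v
    proof -
      have "\<forall>r<n. (\<Sum>v\<in>S e. c e v * v $ r) = 0"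
      proof (intro allI impI)
        fix r assume r: "r < n"
        have "(\<Sum>v\<in>S e. c e v * v $ r) = w e $ r" unfolding w_def using r by simp
        thus "(\<Sum>v\<in>S e. c e v * v $ r) = 0" using w0 e r by simp
      qed
      with S_ind[of e] v show ?thesis unfolding indep_vecs_def by blast
    qed
    show ?thesis
    proof (intro allI impI)
      fix k assume k: "k < s"
      from fP[OF k] obtain e v where fk: "f k = (e, v)" and e: "e \<in> L" and v: "v \<in> S e"
        unfolding P_def by (cases "f k", auto)
      have "a k = c e v" unfolding c_def fk[symmetric] fif[OF k] ..
      thus "a k = 0" using c0[OF e v] by simp
    qed
  qed
  have main: "n*s - d*n \<le> kernel_dim (block_M A B)"
    by (rule core[OF A B core_u _ g_inj lam_g], insert ind, auto)
  have ge1: "1 \<le> geom_mult B e" if e: "e \<in> L" for e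
  proof -
    have "eigenvalue B e" using e unfolding L_def by simp
    hence "S e \<noteq> {}" by (rule S_ne)
    hence "card (S e) \<noteq> 0" using S_fin[of e] by simp
    thus ?thesis using S_card[of e] by simp
  qed
  have "(\<Sum>e\<in>L. geom_mult B e - 1) + d = (\<Sum>e\<in>L. (geom_mult B e - 1) + 1)"
    unfolding d_def sum.distrib by simp
  also have "\<dots> = s" unfolding s_sum
  proof (intro sum.cong refl)
    fix e assume "e \<in> L"
    hence "1 \<le> geom_mult B e" by (rule ge1)
    thus "geom_mult B e - 1 + 1 = geom_mult B e" by simp
  qed
  finally have "(\<Sum>e\<in>L. geom_mult B e - 1) = s - d" by simp
  hence "n * (\<Sum>e\<in>L. geom_mult B e - 1) = n*s - d*n"
    by (simp add: diff_mult_distrib2 mult.commute)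
  with main show ?thesis unfolding L_def by simp
qed


end
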